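(* Let $N_2$ be the set of non-negative integers whose base-3 representation does not use the digit $2$. For each integer $n\ge0$ let $\ell_n^+,\ell_n^-$ be the unique non-negative integers with $\ell_n^+,\ell_n^-,\ell_n^++\ell_n^-\in N_2$ and $n=\ell_n^+-\ell_n^-$, and set $\ell_n=\ell_n^++\ell_n^-$. Let $\alpha,\beta$ be the maps on finite and infinite words over $X_3=\{0,1,2\}$ defined recursively by \[\alpha(0w)=0\alpha(w),\ \alpha(1w)=1\alpha(w),\ \alpha(2w)=1\beta(w),\quad \beta(0w)=1\alpha(w),\ \beta(1w)=1\beta(w),\ \beta(2w)=0\beta(w).\] For $n\ge0$ let $(n)_3=n_0n_1n_2\dots$ be the infinite word of base-3 digits of $n$, least significant first, ending in $0^\infty$. Then for every $n\ge0$ the infinite word $\alpha((n)_3)$ is the infinite word of base-3 digits of $\ell_n$, least significant first; i.e. the sequence $(\ell_n)_{n\ge0}$ is the ternary transducer integer sequence generated by the transducer with states $\alpha,\beta$ started at $\alpha$.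
   Context: The recursion for $\alpha,\beta$ determines their action on infinite words letter by letter. *)

theory Defs
  imports Main
begin

text \<open>Infinite words over X_3 = {0,1,2} are sequences nat => nat (position k = k-th letter).\<close>

definition ternary :: "nat \<Rightarrow> nat \<Rightarrow> nat" where
  "ternary n k = (n div 3 ^ k) mod 3"

definition N2 :: "nat set" where
  "N2 = {m. \<forall>k. ternary m k \<noteq> 2}"

definition ell_pair :: "nat \<Rightarrow> nat \<times> nat" where
  "ell_pair n = (THE p. fst p \<in> N2 \<and> snd p \<in> N2 \<and> fst p + snd p \<in> N2
                      \<and> int n = int (fst p) - int (snd p))"

definition ell :: "nat \<Rightarrow> nat" where
  "ell n = fst (ell_pair n) + snd (ell_pair n)"

datatype state = Alpha | Beta

fun tr_out :: "state \<Rightarrow> nat \<Rightarrow> nat" where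
  "tr_out Alpha x = (if x = 0 then 0 else 1)"
| "tr_out Beta x = (if x = 2 then 0 else 1)"

fun tr_next :: "state \<Rightarrow> nat \<Rightarrow> state" where
  "tr_next Alpha x = (if x = 2 then Beta else Alpha)"
| "tr_next Beta x = (if x = 0 then Alpha else Beta)"

primrec tr_state :: "state \<Rightarrow> (nat \<Rightarrow> nat) \<Rightarrow> nat \<Rightarrow> state" where
  "tr_state q w 0 = q"
| "tr_state q w (Suc k) = tr_next (tr_state q w k) (w k)"

definition tr_apply :: "state \<Rightarrow> (nat \<Rightarrow> nat) \<Rightarrow> (nat \<Rightarrow> nat)" where
  "tr_apply q w k = tr_out (tr_state q w k) (w k)"

end

theory Submission
  imports Defs
begin

lemma ternary_0: "ternary m 0 = m mod 3"
  by (simp add: ternary_def)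

lemma ternary_Suc: "ternary m (Suc k) = ternary (m div 3) k"
  by (simp add: ternary_def div_mult2_eq)

lemma N2_iff: "m \<in> N2 \<longleftrightarrow> m mod 3 \<noteq> 2 \<and> m div 3 \<in> N2"
proof
  assume "m \<in> N2"
  then have h: "\<forall>k. ternary m k \<noteq> 2" by (simp add: N2_def)
  show "m mod 3 \<noteq> 2 \<and> m div 3 \<in> N2"
    using h[rule_format, of 0] h[rule_format, of "Suc _"]
    by (auto simp: N2_def ternary_0 ternary_Suc)
next
  assume h: "m mod 3 \<noteq> 2 \<and> m div 3 \<in> N2"
  show "m \<in> N2" unfolding N2_def
  proof (intro CollectI allI)
    fix k show "ternary m k \<noteq> 2"
      using h by (cases k) (auto simp: N2_def ternary_0 ternary_Suc)
  qed
qed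

lemma key: "(ra::int) \<in> {0,1} \<Longrightarrow> rb \<in> {0,1} \<Longrightarrow> \<not>(ra=1\<and>rb=1) \<Longrightarrow> rc \<in> {0,1} \<Longrightarrow> rd \<in> {0,1} \<Longrightarrow> \<not>(rc=1\<and>rd=1)
  \<Longrightarrow> 3*x + ra - rb = 3*y + rc - rd \<Longrightarrow> ra=rc \<and> rb=rd \<and> x=y"
  by auto presburger+

lemma decomp:
  assumes "a mod 3 \<noteq> 2" "b mod 3 \<noteq> 2" "(a+b) mod 3 \<noteq> 2"
  shows "int (a mod 3) \<in> {0,1} \<and> int (b mod 3) \<in> {0,1} \<and> \<not>(a mod 3 = 1 \<and> b mod 3 = 1)
    \<and> (a+b) div 3 = a div 3 + b div 3
    \<and> int a - int b = 3 * (int (a div 3) - int (b div 3)) + int (a mod 3) - int (b mod 3)"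
proof -
  have ra: "a mod 3 = 0 \<or> a mod 3 = 1" using assms(1) by linarith
  have rb: "b mod 3 = 0 \<or> b mod 3 = 1" using assms(2) by linarith
  have "(a+b) mod 3 = (a mod 3 + b mod 3) mod 3" by (rule mod_add_eq[symmetric])
  then have r: "\<not>(a mod 3 = 1 \<and> b mod 3 = 1)" using assms(3) by auto
  have "(a+b) div 3 = a div 3 + b div 3 + (a mod 3 + b mod 3) div 3" by (rule div_add1_eq)
  moreover have "(a mod 3 + b mod 3) div 3 = 0" using ra rb r by auto
  ultimately have d: "(a+b) div 3 = a div 3 + b div 3" by simp
  have e1: "int a = 3 * int (a div 3) + int (a mod 3)"
    by (metis div_mult_mod_eq of_nat_add of_nat_mult of_nat_numeral mult.commute)
  have e2: "int b = 3 * int (b div 3) + int (b mod 3)"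
    by (metis div_mult_mod_eq of_nat_add of_nat_mult of_nat_numeral mult.commute)
  show ?thesis using ra rb r d e1 e2 by (auto simp: algebra_simps)
qed

lemma uniq:
  "a \<in> N2 \<Longrightarrow> b \<in> N2 \<Longrightarrow> a + b \<in> N2 \<Longrightarrow> c \<in> N2 \<Longrightarrow> d \<in> N2 \<Longrightarrow> c + d \<in> N2
   \<Longrightarrow> int a - int b = int c - int d \<Longrightarrow> a = c \<and> b = d"
proof (induction "a+b+c+d" arbitrary: a b c d rule: less_induct)
  case less
  show ?case
  proof (cases "a+b+c+d = 0")
    case True then show ?thesis by simp
  next
    case False
    have m: "a mod 3 \<noteq> 2" "b mod 3 \<noteq> 2" "(a+b) mod 3 \<noteq> 2"
            "c mod 3 \<noteq> 2" "d mod 3 \<noteq> 2" "(c+d) mod 3 \<noteq> 2"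
      using less.prems N2_iff by blast+
    have d: "a div 3 \<in> N2" "b div 3 \<in> N2" "(a+b) div 3 \<in> N2"
            "c div 3 \<in> N2" "d div 3 \<in> N2" "(c+d) div 3 \<in> N2"
      using less.prems N2_iff by blast+
    note D1 = decomp[OF m(1-3)] and D2 = decomp[OF m(4-6)]
    have K: "int (a mod 3) = int (c mod 3) \<and> int (b mod 3) = int (d mod 3)
       \<and> int (a div 3) - int (b div 3) = int (c div 3) - int (d div 3)"
      apply (rule key)
      using D1 D2 less.prems(7) by auto
    then have mods: "a mod 3 = c mod 3" "b mod 3 = d mod 3" by simp_all
    have lt: "a div 3 + b div 3 + c div 3 + d div 3 < a+b+c+d" using False by linarith
    have ab3: "a div 3 + b div 3 \<in> N2" "c div 3 + d div 3 \<in> N2" using d D1 D2 by simp_all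
    have "a div 3 = c div 3 \<and> b div 3 = d div 3"
      using less.hyps[OF lt d(1,2) ab3(1) d(4,5) ab3(2)] K by simp
    then show ?thesis using mods by (metis div_mult_mod_eq)
  qed
qed

lemma N2_3: assumes "x \<in> N2" "(r::nat) \<le> 1" shows "3*x + r \<in> N2"
proof -
  have "(3*x + r) mod 3 = r" "(3*x+r) div 3 = x" using assms(2) by auto
  then show ?thesis using assms N2_iff[of "3*x+r"] by simp
qed

lemma N2_0: "0 \<in> N2" by (simp add: N2_def ternary_def)

lemma exist: "\<exists>a b. a \<in> N2 \<and> b \<in> N2 \<and> a + b \<in> N2 \<and> int n = int a - int b"
proof (induction n rule: less_induct)
  case (less n)
  show ?case
  proof (cases "n = 0")
    case True
    then show ?thesis using N2_0 by (intro exI[of _ 0]) simp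
  next
    case False
    have e: "n = 3 * (n div 3) + n mod 3" by simp
    have ei: "int n = 3 * int (n div 3) + int (n mod 3)"
      by (metis div_mult_mod_eq of_nat_add of_nat_mult of_nat_numeral mult.commute)
    show ?thesis
    proof (cases "n mod 3 = 2")
      case True
      then have "n div 3 + 1 < n" using e by linarith
      from less[OF this] obtain a b where ab: "a \<in> N2" "b \<in> N2" "a + b \<in> N2"
        "int (n div 3 + 1) = int a - int b" by blast
      have "3*a \<in> N2" using ab N2_3[of a 0] by simp
      moreover have "3*b+1 \<in> N2" using ab N2_3[of b 1] by simp
      moreover have "3*a + (3*b+1) = 3*(a+b) + 1" by simp
      then have "3*a + (3*b+1) \<in> N2" using ab N2_3[of "a+b" 1] by simp
      moreover have "int n = int (3*a) - int (3*b+1)" using ab(4) True ei by simp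
      ultimately show ?thesis by blast
    next
      case nt: False
      have "n div 3 < n" using False by simp
      from less[OF this] obtain a b where ab: "a \<in> N2" "b \<in> N2" "a + b \<in> N2"
        "int (n div 3) = int a - int b" by blast
      have r: "n mod 3 \<le> 1" using nt by linarith
      have "3*a + n mod 3 \<in> N2" using ab r N2_3[of a "n mod 3"] by simp
      moreover have "3*b \<in> N2" using ab N2_3[of b 0] by simp
      moreover have "3*a + n mod 3 + 3*b = 3*(a+b) + n mod 3" by simp
      then have "3*a + n mod 3 + 3*b \<in> N2" using ab r N2_3[of "a+b" "n mod 3"] by (simp add: add_ac)
      moreover have "int n = int (3*a + n mod 3) - int (3*b)" using ab(4) ei by simp
      ultimately show ?thesis by blast
    qed
  qed
qed

lemma int_div3: "(3::int)*x + r = 3*y + s \<Longrightarrow> 0\<le>r \<Longrightarrow> r<3 \<Longrightarrow> 0\<le>s \<Longrightarrow> s<3 \<Longrightarrow> r=s \<and> x=y"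
  by presburger

lemma ell_pair_eq:
  assumes "a \<in> N2" "b \<in> N2" "a + b \<in> N2" "int m = int a - int b"
  shows "ell_pair m = (a, b)"
  unfolding ell_pair_def
proof (rule the_equality)
  show "fst (a, b) \<in> N2 \<and> snd (a, b) \<in> N2 \<and> fst (a, b) + snd (a, b) \<in> N2 \<and>
    int m = int (fst (a, b)) - int (snd (a, b))" using assms by simp
next
  fix p :: "nat \<times> nat"
  assume h: "fst p \<in> N2 \<and> snd p \<in> N2 \<and> fst p + snd p \<in> N2 \<and> int m = int (fst p) - int (snd p)"
  have "fst p = a \<and> snd p = b"
    apply (rule uniq) using h assms by auto
  then show "p = (a, b)" by (simp add: prod_eq_iff)
qed

lemma ell_rec:
  "ell m mod 3 = (if m mod 3 = 0 then 0 else 1) \<and>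
   ell m div 3 = ell (m div 3 + (if m mod 3 = 2 then 1 else 0))"
proof -
  obtain a b where ab: "a \<in> N2" "b \<in> N2" "a + b \<in> N2" "int m = int a - int b"
    using exist by blast
  have e: "ell m = a + b" using ell_pair_eq[OF ab] by (simp add: ell_def)
  have m: "a mod 3 \<noteq> 2" "b mod 3 \<noteq> 2" "(a+b) mod 3 \<noteq> 2"
    using ab N2_iff by blast+
  have d: "a div 3 \<in> N2" "b div 3 \<in> N2" "(a+b) div 3 \<in> N2"
    using ab N2_iff by blast+
  note D = decomp[OF m]
  have ra: "a mod 3 = 0 \<or> a mod 3 = 1" using m by linarith
  have rb: "b mod 3 = 0 \<or> b mod 3 = 1" using m by linarith
  have mi: "int m = 3 * int (m div 3) + int (m mod 3)"
    by (metis div_mult_mod_eq of_nat_add of_nat_mult of_nat_numeral mult.commute)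
  have mm: "m mod 3 < 3" by simp
  have D5: "int a - int b = 3 * (int (a div 3) - int (b div 3)) + int (a mod 3) - int (b mod 3)"
    using D by blast
  have eq: "3 * int (m div 3) + int (m mod 3) = 3 * (int (a div 3) - int (b div 3)) + int (a mod 3) - int (b mod 3)"
    using D5 ab(4) mi by linarith
  have r3: "int (m mod 3) < 3" by simp
  have am: "(a+b) mod 3 = (a mod 3 + b mod 3) mod 3" by (rule mod_add_eq[symmetric])
  have i: "int (m div 3 + (if m mod 3 = 2 then 1 else 0)) = int (a div 3) - int (b div 3)
     \<and> (a + b) mod 3 = (if m mod 3 = 0 then 0 else 1)"
  proof -
    consider "a mod 3 = 0" "b mod 3 = 0" | "a mod 3 = 1" "b mod 3 = 0" | "a mod 3 = 0" "b mod 3 = 1"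
      using ra rb D by fastforce
    then show ?thesis
    proof cases
      case 1
      then have "3 * int (m div 3) + int (m mod 3) = 3 * (int (a div 3) - int (b div 3)) + 0"
        using eq by simp
      from int_div3[OF this] r3 have "m mod 3 = 0" "int (m div 3) = int (a div 3) - int (b div 3)" by auto
      then show ?thesis using 1 am by simp
    next
      case 2
      then have "3 * int (m div 3) + int (m mod 3) = 3 * (int (a div 3) - int (b div 3)) + 1"
        using eq by simp
      from int_div3[OF this] r3 have "m mod 3 = 1" "int (m div 3) = int (a div 3) - int (b div 3)" by auto
      then show ?thesis using 2 am by simp
    next
      case 3
      then have "3 * int (m div 3) + int (m mod 3) = 3 * (int (a div 3) - int (b div 3) - 1) + 2"
        using eq by simp
      from int_div3[OF this] r3 have "m mod 3 = 2" "int (m div 3) = int (a div 3) - int (b div 3) - 1" by auto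
      then show ?thesis using 3 am by simp
    qed
  qed
  have s: "(a+b) div 3 = a div 3 + b div 3" using D by blast
  have e2: "ell (m div 3 + (if m mod 3 = 2 then 1 else 0)) = a div 3 + b div 3"
    using ell_pair_eq[OF d(1,2) _ conjunct1[OF i]] d(3) s by (simp add: ell_def)
  have "(a + b) mod 3 = (if m mod 3 = 0 then 0 else 1)" using i by blast
  then show ?thesis unfolding e e2 s by blast
qed

lemma tr_state_Suc:
  "tr_state q w (Suc k) = tr_state (tr_next q (w 0)) (\<lambda>i. w (Suc i)) k"
  by (induction k) auto

definition carry :: "state \<Rightarrow> nat" where
  "carry q = (if q = Beta then 1 else 0)"

lemma beta_arith:
  "(if (n::nat) mod 3 = 2 then 0 else (1::nat)) = (if (n + 1) mod 3 = 0 then 0 else 1)"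
  "n div 3 + (if n mod 3 = 0 then 0 else 1) = (n + 1) div 3 + (if (n + 1) mod 3 = 2 then 1 else 0)"
proof -
  obtain q r where "n = 3*q + r" "r < 3" by (metis div_mult_mod_eq mod_less_divisor zero_less_numeral mult.commute)
  moreover have "r = 0 \<or> r = 1 \<or> r = 2" using calculation by linarith
  ultimately show "(if (n::nat) mod 3 = 2 then 0 else (1::nat)) = (if (n + 1) mod 3 = 0 then 0 else 1)"
     "n div 3 + (if n mod 3 = 0 then 0 else 1) = (n + 1) div 3 + (if (n + 1) mod 3 = 2 then 1 else 0)"
    by auto
qed

lemma gen: "tr_apply q (ternary n) k = ternary (ell (n + carry q)) k"
proof (induction k arbitrary: q n)
  case 0
  have "tr_out q (n mod 3) = (if (n + carry q) mod 3 = 0 then 0 else 1)"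
    using beta_arith(1)[of n] by (cases q) (auto simp: carry_def)
  then show ?case using ell_rec[of "n + carry q"]
    by (simp add: tr_apply_def ternary_0)
next
  case (Suc k)
  have w: "(\<lambda>i. ternary n (Suc i)) = ternary (n div 3)"
    by (simp add: ternary_Suc)
  have "tr_apply q (ternary n) (Suc k) = tr_apply (tr_next q (n mod 3)) (ternary (n div 3)) k"
    unfolding tr_apply_def using tr_state_Suc[of q "ternary n" k] w
    by (simp add: ternary_0 ternary_Suc)
  also have "\<dots> = ternary (ell (n div 3 + carry (tr_next q (n mod 3)))) k"
    by (rule Suc.IH)
  also have "n div 3 + carry (tr_next q (n mod 3)) =
      (n + carry q) div 3 + (if (n + carry q) mod 3 = 2 then 1 else 0)"
    using beta_arith(2)[of n] by (cases q) (auto simp: carry_def)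
  also have "ternary (ell \<dots>) k = ternary (ell (n + carry q)) (Suc k)"
    using ell_rec[of "n + carry q"] by (simp add: ternary_Suc)
  finally show ?case .
qed

theorem mainTheorem6:
  fixes n :: nat
  shows "tr_apply Alpha (ternary n) = ternary (ell n)"
proof
  fix k show "tr_apply Alpha (ternary n) k = ternary (ell n) k"
    using gen[of Alpha n k] by (simp add: carry_def)
qed

end
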